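(* Let $d\ge 0$ and $t\ge 0$ be integers and let $\beta=\left\lfloor\frac{t+1}{d+1}\right\rfloor$, and assume $\beta>1$. For any simplicial complex $K$ of dimension $d$ containing $m$ simplices, the number of distinct filtrations $f:K\to\{0,1,\ldots,t\}$ is at least $\beta^{m}$. Moreover, if $\beta>(d+1)^{\delta}$ for some constant $\delta>0$, then any data structure that can represent filtrations of the class of all $d$-dimensional simplicial complexes containing $m$ simplices requires $\Omega(m\log t)$ bits to be stored.
   Context: A filtration of a simplicial complex $K$ with range $\{0,1,\ldots,t\}$ is a function $f:K\to\{0,1,\ldots,t\}$ such that $f(\tau)\le f(\sigma)$ whenever $\tau\subseteq\sigma$. A data structure representing a class of objects is an encoding of each object as a bit string such that distinct objects receive distinct encodings; its storage requirement is the maximum length of an encoding. *)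

theory Defs
  imports Complex_Main
begin

definition simplicial_complex :: "'a set set \<Rightarrow> bool" where
  "simplicial_complex K \<longleftrightarrow> finite K \<and>
     (\<forall>\<sigma>\<in>K. finite \<sigma> \<and> \<sigma> \<noteq> {}) \<and>
     (\<forall>\<sigma>\<in>K. \<forall>\<tau>. \<tau> \<subseteq> \<sigma> \<and> \<tau> \<noteq> {} \<longrightarrow> \<tau> \<in> K)"

definition complex_dim :: "'a set set \<Rightarrow> nat \<Rightarrow> bool" where
  "complex_dim K d \<longleftrightarrow> (\<exists>\<sigma>\<in>K. card \<sigma> = d + 1) \<and> (\<forall>\<sigma>\<in>K. card \<sigma> \<le> d + 1)"

text \<open>Filtrations of K with range {0..t}; functions are taken extensional
  (value 0 outside K) so that distinct filtrations are distinct functions.\<close>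
definition filtrations :: "'a set set \<Rightarrow> nat \<Rightarrow> ('a set \<Rightarrow> nat) set" where
  "filtrations K t = {f. (\<forall>\<sigma>\<in>K. f \<sigma> \<le> t) \<and>
     (\<forall>\<sigma>\<in>K. \<forall>\<tau>\<in>K. \<tau> \<subseteq> \<sigma> \<longrightarrow> f \<tau> \<le> f \<sigma>) \<and>
     (\<forall>\<sigma>. \<sigma> \<notin> K \<longrightarrow> f \<sigma> = 0)}"

definition filtered_class :: "nat \<Rightarrow> nat \<Rightarrow> nat \<Rightarrow> ('a set set \<times> ('a set \<Rightarrow> nat)) set" where
  "filtered_class d m t = {(K, f). simplicial_complex K \<and> complex_dim K d \<and> card K = m \<and>
     f \<in> filtrations K t}"

end

theory Submission
  imports Defs "HOL-Library.FuncSet"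
begin

lemma part1:
  fixes K :: "'a set set"
  assumes sc: "simplicial_complex K" and dm: "complex_dim K d"
  shows "((t + 1) div (d + 1)) ^ card K \<le> card (filtrations K t)"
proof -
  define b where "b = (t + 1) div (d + 1)"
  have fK: "finite K" and ne: "\<And>s. s \<in> K \<Longrightarrow> finite s \<and> s \<noteq> {}"
    using sc unfolding simplicial_complex_def by auto
  have cd: "\<And>s. s \<in> K \<Longrightarrow> card s \<le> d + 1" using dm unfolding complex_dim_def by auto
  have bt: "(d + 1) * b \<le> t + 1" unfolding b_def
    by (metis div_times_less_eq_dividend mult.commute)
  define G where "G = PiE K (\<lambda>_. {..<b})"
  define h where "h = (\<lambda>g. \<lambda>s. if s \<in> K then (card s - 1) * b + g s else (0::nat))"
  have cG: "card G = b ^ card K" unfolding G_def using fK by (simp add: card_PiE)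
  have inj: "inj_on h G"
  proof (rule inj_onI)
    fix g1 g2 assume g1: "g1 \<in> G" and g2: "g2 \<in> G" and e: "h g1 = h g2"
    show "g1 = g2"
    proof
      fix s show "g1 s = g2 s"
      proof (cases "s \<in> K")
        case True then show ?thesis using fun_cong[OF e, of s] unfolding h_def by simp
      next
        case False then show ?thesis using g1 g2 unfolding G_def by (simp add: PiE_def extensional_def)
      qed
    qed
  qed
  have key: "\<And>g s. g \<in> G \<Longrightarrow> s \<in> K \<Longrightarrow> h g s < card s * b"
  proof -
    fix g s assume g: "g \<in> G" and s: "s \<in> K"
    have "g s < b" using g s unfolding G_def by auto
    moreover have "card s \<ge> 1" using ne[OF s] by (simp add: Suc_leI card_gt_0_iff)
    moreover obtain k where "card s = Suc k" using \<open>card s \<ge> 1\<close> using not0_implies_Suc by force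
    ultimately show "h g s < card s * b" unfolding h_def using s by simp
  qed
  have sub: "h ` G \<subseteq> filtrations K t"
  proof
    fix f assume "f \<in> h ` G"
    then obtain g where g: "g \<in> G" and f: "f = h g" by auto
    have A: "\<forall>s\<in>K. f s \<le> t"
    proof
      fix s assume s: "s \<in> K"
      have "card s * b \<le> (d + 1) * b" using cd[OF s] by (rule mult_le_mono1)
      then show "f s \<le> t" using key[OF g s] bt f by simp
    qed
    have B: "\<forall>s\<in>K. \<forall>u\<in>K. u \<subseteq> s \<longrightarrow> f u \<le> f s"
    proof (intro ballI impI)
      fix s u assume s: "s \<in> K" and u: "u \<in> K" and us: "u \<subseteq> s"
      show "f u \<le> f s"
      proof (cases "u = s")
        case True then show ?thesis by simp
      next
        case False
        then have "u \<subset> s" using us by auto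
        then have "card u < card s" using ne[OF s] by (simp add: psubset_card_mono)
        then have "card u \<le> card s - 1" by simp
        then have "card u * b \<le> (card s - 1) * b" by (rule mult_le_mono1)
        moreover have "(card s - 1) * b \<le> h g s" unfolding h_def using s by simp
        ultimately have "h g u \<le> h g s" using key[OF g u] by linarith
        then show ?thesis using f by simp
      qed
    qed
    have C: "\<forall>s. s \<notin> K \<longrightarrow> f s = 0" using f unfolding h_def by simp
    show "f \<in> filtrations K t" unfolding filtrations_def using A B C by blast
  qed
  have fin: "finite (filtrations K t)"
  proof (rule finite_subset)
    show "filtrations K t \<subseteq> {f. \<forall>x. (x \<in> K \<longrightarrow> f x \<in> {..t}) \<and> (x \<notin> K \<longrightarrow> f x = 0)}"
      unfolding filtrations_def by auto
    show "finite {f. \<forall>x. (x \<in> K \<longrightarrow> f x \<in> {..t}) \<and> (x \<notin> K \<longrightarrow> f x = (0::nat))}"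
      using fK by (intro finite_set_of_finite_funs) auto
  qed
  have "card (h ` G) = card G" using inj by (simp add: card_image)
  moreover have "card (h ` G) \<le> card (filtrations K t)" using sub fin by (simp add: card_mono)
  ultimately show ?thesis using cG b_def by simp
qed

lemma lists_card:
  "finite {xs::bool list. length xs \<le> L} \<and> card {xs::bool list. length xs \<le> L} < 2 ^ (L + 1)"
proof (induction L)
  case 0
  have "{xs::bool list. length xs \<le> 0} = {[]}" by auto
  then show ?case by simp
next
  case (Suc L)
  have eq: "{xs::bool list. length xs \<le> Suc L} = {xs. length xs \<le> L} \<union> {xs. set xs \<subseteq> UNIV \<and> length xs = Suc L}"
    by auto
  have f2: "finite {xs::bool list. set xs \<subseteq> UNIV \<and> length xs = Suc L}"
    using finite_lists_length_eq[of "UNIV::bool set"] by simp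
  have c2: "card {xs::bool list. set xs \<subseteq> UNIV \<and> length xs = Suc L} = 2 ^ Suc L"
    using card_lists_length_eq[of "UNIV::bool set" "Suc L"] by simp
  have "card {xs::bool list. length xs \<le> Suc L} \<le> card {xs::bool list. length xs \<le> L} + 2 ^ Suc L"
    unfolding eq using card_Un_le c2 by metis
  then show ?case using Suc.IH f2 eq by simp
qed

theorem lemma3:
  shows "(\<forall>(d::nat) (t::nat) (m::nat) (K::'a set set).
            (t + 1) div (d + 1) > 1 \<longrightarrow> simplicial_complex K \<longrightarrow> complex_dim K d \<longrightarrow>
            card K = m \<longrightarrow> card (filtrations K t) \<ge> ((t + 1) div (d + 1)) ^ m)
    \<and> (\<forall>\<delta>::real. \<delta> > 0 \<longrightarrow> (\<exists>C::real. C > 0 \<and>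
         (\<forall>(d::nat) (t::nat) (m::nat) (enc :: 'a set set \<times> ('a set \<Rightarrow> nat) \<Rightarrow> bool list).
            (t + 1) div (d + 1) > 1 \<longrightarrow>
            real ((t + 1) div (d + 1)) > real (d + 1) powr \<delta> \<longrightarrow>
            (filtered_class d m t :: ('a set set \<times> ('a set \<Rightarrow> nat)) set) \<noteq> {} \<longrightarrow>
            inj_on enc (filtered_class d m t) \<longrightarrow>
            (\<exists>x\<in>filtered_class d m t. real (length (enc x)) \<ge> C * real m * log 2 (real t)))))"
proof (intro conjI allI impI)
  fix d t m :: nat and K :: "'a set set"
  assume "simplicial_complex K" "complex_dim K d" "card K = m"
  then show "card (filtrations K t) \<ge> ((t + 1) div (d + 1)) ^ m" using part1 by blast
next
  fix \<delta> :: real assume dp: "\<delta> > 0"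
  define C where "C = 1 / (2 * (2 + 1 / \<delta>))"
  show "\<exists>C::real. C > 0 \<and>
         (\<forall>(d::nat) (t::nat) (m::nat) (enc :: 'a set set \<times> ('a set \<Rightarrow> nat) \<Rightarrow> bool list).
            (t + 1) div (d + 1) > 1 \<longrightarrow>
            real ((t + 1) div (d + 1)) > real (d + 1) powr \<delta> \<longrightarrow>
            (filtered_class d m t :: ('a set set \<times> ('a set \<Rightarrow> nat)) set) \<noteq> {} \<longrightarrow>
            inj_on enc (filtered_class d m t) \<longrightarrow>
            (\<exists>x\<in>filtered_class d m t. real (length (enc x)) \<ge> C * real m * log 2 (real t)))"
  proof (intro exI conjI allI impI)
    show "C > 0" unfolding C_def using dp by (simp add: add_pos_pos)
  next
    fix d t m :: nat and enc :: "'a set set \<times> ('a set \<Rightarrow> nat) \<Rightarrow> bool list"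
    assume b1: "(t + 1) div (d + 1) > 1"
      and bd: "real ((t + 1) div (d + 1)) > real (d + 1) powr \<delta>"
      and nem: "(filtered_class d m t :: ('a set set \<times> ('a set \<Rightarrow> nat)) set) \<noteq> {}"
      and inj: "inj_on enc (filtered_class d m t)"
    define b where "b = (t + 1) div (d + 1)"
    obtain K :: "'a set set" and f0 where "(K, f0) \<in> filtered_class d m t" using nem by auto
    then have sc: "simplicial_complex K" and dm: "complex_dim K d" and cK: "card K = m"
      unfolding filtered_class_def by auto
    have m1: "m \<ge> 1" using dm cK sc unfolding complex_dim_def simplicial_complex_def
      by (metis One_nat_def Suc_leI card_gt_0_iff empty_iff)
    have b2: "b \<ge> 2" using b1 b_def by simp
    define F where "F = filtrations K t"
    have cF: "b ^ m \<le> card F" using part1[OF sc dm, of t] cK b_def F_def by simp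
    have bm2: "b ^ m \<ge> 2"
    proof -
      have "b ^ 1 \<le> b ^ m" using m1 b2 by (intro power_increasing) auto
      then show ?thesis using b2 by simp
    qed
    have finF: "finite F" using cF bm2 by (metis card.infinite le_zero_eq not_numeral_le_zero)
    define S where "S = (\<lambda>f. (K, f)) ` F"
    have SC: "S \<subseteq> filtered_class d m t" unfolding S_def F_def filtered_class_def
      using sc dm cK by auto
    have finS: "finite S" using finF S_def by simp
    have cS: "card S = card F" unfolding S_def by (simp add: card_image inj_on_def)
    have neS: "S \<noteq> {}"
    proof
      assume "S = {}" then have "card F = 0" using cS by simp
      then show False using cF bm2 by linarith
    qed
    define L where "L = Max (length ` enc ` S)"
    have "L \<in> length ` enc ` S" unfolding L_def using finS neS by (intro Max_in) auto
    then obtain x where xS: "x \<in> S" and xL: "length (enc x) = L" by auto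
    have "enc ` S \<subseteq> {xs. length xs \<le> L}" unfolding L_def using finS by auto
    then have "card (enc ` S) \<le> card {xs::bool list. length xs \<le> L}"
      using lists_card[of L] by (simp add: card_mono)
    moreover have "card (enc ` S) = card S" using inj SC by (metis card_image inj_on_subset)
    ultimately have bmL: "b ^ m < 2 ^ (L + 1)" using lists_card[of L] cS cF by linarith
    have L1: "L \<ge> 1"
    proof (rule ccontr)
      assume "\<not> L \<ge> 1" then have "L = 0" by simp
      then show False using bmL bm2 by simp
    qed
    have "real (b ^ m) < real (2 ^ (L+1))" using bmL by linarith
    then have "log 2 (real b ^ m) < log 2 (2 ^ (L + 1))" using b2 by simp
    moreover have "log 2 ((2::real) ^ (L + 1)) = real L + 1" by (simp only: log_nat_power) simp
    moreover have "log 2 (real b ^ m) = real m * log 2 b" using b2 by (simp add: log_nat_power)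
    ultimately have mlb: "real m * log 2 b < real L + 1" by simp
    have lb1: "log 2 b \<ge> 1" using b2 by simp
    have t1: "t \<ge> 1"
    proof (rule ccontr)
      assume "\<not> t \<ge> 1" then have "t = 0" by simp
      moreover have "(t + 1) div (d + 1) \<le> t + 1" by (rule div_le_dividend)
      ultimately show False using b1 by linarith
    qed
    have tlt: "t + 1 < (d + 1) * (b + 1)"
    proof -
      have e: "t + 1 = b * (d + 1) + (t + 1) mod (d + 1)" unfolding b_def
        by (rule div_mult_mod_eq[symmetric])
      have "(t + 1) mod (d + 1) < d + 1" by simp
      then have "t + 1 < b * (d + 1) + (d + 1)" using e by linarith
      also have "\<dots> = (d + 1) * (b + 1)" by (simp add: algebra_simps)
      finally show ?thesis .
    qed
    have bpos: "real b > 0" using b2 by simp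
    have dpos: "real (d + 1) powr \<delta> > 0" by simp
    have "log 2 (real (d + 1) powr \<delta>) < log 2 (real b)"
      using bd dpos bpos unfolding b_def[symmetric] by (subst log_less_cancel_iff) auto
    then have ld: "\<delta> * log 2 (real (d + 1)) < log 2 b" by (simp add: log_powr)
    have ld2: "log 2 (real (d + 1)) < log 2 b / \<delta>" using ld dp by (simp add: field_simps)
    have tr: "real t + 1 < real (d + 1) * (real b + 1)"
    proof -
      have "real (t + 1) < real ((d + 1) * (b + 1))" using tlt by (simp only: of_nat_less_iff)
      then show ?thesis by (simp add: algebra_simps)
    qed
    have tpos: "real t > 0" using t1 by simp
    have l1: "log 2 (real t) < log 2 (real (d + 1) * (real b + 1))"
      using tr tpos by (subst log_less_cancel_iff) auto
    have l2: "log 2 (real (d + 1) * (real b + 1)) = log 2 (real (d + 1)) + log 2 (real b + 1)"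
      using bpos by (subst log_mult) auto
    have l3: "log 2 (real b + 1) \<le> log 2 (2 * real b)" using b2 bpos by (subst log_le_cancel_iff) auto
    have l4: "log 2 (2 * real b) = 1 + log 2 b" using bpos by (subst log_mult) auto
    have "log 2 b / \<delta> + 1 + log 2 b \<le> (2 + 1/\<delta>) * log 2 b"
      using lb1 by (simp add: algebra_simps add_divide_distrib)
    then have lt: "log 2 t \<le> (2 + 1/\<delta>) * log 2 b" using l1 l2 l3 l4 ld2 by linarith
    have "C * real m * log 2 t \<le> C * real m * ((2 + 1/\<delta>) * log 2 b)"
      using lt m1 dp unfolding C_def by (intro mult_left_mono) auto
    also have "\<dots> = real m * log 2 b / 2"
    proof -
      have p: "2 + 1/\<delta> > 0" using dp by (simp add: add_pos_pos)
      have "C * (2 + 1/\<delta>) = 1/2" unfolding C_def using p by simp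
      then show ?thesis by (metis (no_types, lifting) mult.assoc mult.commute times_divide_eq_right mult_1_right)
    qed
    also have "\<dots> \<le> real L" using mlb L1 by simp
    finally show "\<exists>x\<in>filtered_class d m t. real (length (enc x)) \<ge> C * real m * log 2 (real t)"
      using xS SC xL by auto
  qed
qed

end
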